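(* Let $\{U'_{k,n}\}_{k\in\mathbb Z,n\in\mathbb N}$ and $\{V'_{\{k,k+1\},n}\}_{k\in\mathbb Z,n\in\mathbb N}$ be independent Bernoulli random variables with parameter $\epsilon>0$, and let $Z=Z(U',V')$. If $\epsilon$ is small enough, then for every finite initial set $Z_0$ the process $Z$ dies out almost surely, and there are constants $\beta_0,\beta_1>0$ such that for every finite nonempty $Z_0$, $$\mathbb E(N_{\mathrm{ext}}\mid Z_0)\le\beta_0\log|Z_0|+\beta_1,$$ where $N_{\mathrm{ext}}=\inf\{n\ge0:Z_n=\emptyset\}$.
   Context: Given $\{0,1\}$-valued variables $U_{k,n}$ and $V_{\{k,k+1\},n}$ ($k\in\mathbb Z$, $n\in\mathbb N$), define the graph $H$ on $\mathbb Z\times\mathbb N$: if $U_{k,n}=1$ add edges from $(k,n)$ to $(k-1,n+1),(k,n+1),(k+1,n+1)$; if $V_{\{k,k+1\},n}=1$ add these edges for both $(k,n)$ and $(k+1,n)$ and also the edge $(k,n)$–$(k+1,n)$. An $H$-valid path is a sequence of $H$-adjacent vertices $(k_0,n_0),\dots,(k_f,n_f)$ with $n_0\le\dots\le n_f$ and $n_i<n_f$ for all $i<f$. Given a finite set $Z_0\subseteq\mathbb Z$, for $n\ge1$ let $Z_n$ be the set of $k$ such that some $H$-valid path goes from $Z_0\times\{0\}$ to $(k,n)$; this defines $Z=Z(U,V)$. $Z$ dies out if $Z_n=\emptyset$ for some $n$. *)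

theory Defs
  imports "HOL-Probability.Probability"
begin

text \<open>Configurations: U k n models U_{k,n}; V k n models V_{{k,k+1},n}.
  Vertices of H are pairs (k, n) in int x nat.\<close>

definition H_dir :: "(int \<Rightarrow> nat \<Rightarrow> bool) \<Rightarrow> (int \<Rightarrow> nat \<Rightarrow> bool) \<Rightarrow> int \<times> nat \<Rightarrow> int \<times> nat \<Rightarrow> bool" where
  "H_dir U V a b \<longleftrightarrow>
     (let (k, n) = a; (k', n') = b in
       (n' = n + 1 \<and> \<bar>k' - k\<bar> \<le> 1 \<and> (U k n \<or> V k n \<or> V (k - 1) n))
     \<or> (n' = n \<and> k' = k + 1 \<and> V k n))"

definition H_adj :: "(int \<Rightarrow> nat \<Rightarrow> bool) \<Rightarrow> (int \<Rightarrow> nat \<Rightarrow> bool) \<Rightarrow> int \<times> nat \<Rightarrow> int \<times> nat \<Rightarrow> bool" where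
  "H_adj U V a b \<longleftrightarrow> H_dir U V a b \<or> H_dir U V b a"

definition H_valid_path :: "(int \<Rightarrow> nat \<Rightarrow> bool) \<Rightarrow> (int \<Rightarrow> nat \<Rightarrow> bool) \<Rightarrow> (int \<times> nat) list \<Rightarrow> bool" where
  "H_valid_path U V ps \<longleftrightarrow> ps \<noteq> [] \<and>
     (\<forall>i < length ps - 1. H_adj U V (ps ! i) (ps ! Suc i) \<and> snd (ps ! i) \<le> snd (ps ! Suc i)) \<and>
     (\<forall>i < length ps - 1. snd (ps ! i) < snd (last ps))"

definition Zproc :: "(int \<Rightarrow> nat \<Rightarrow> bool) \<Rightarrow> (int \<Rightarrow> nat \<Rightarrow> bool) \<Rightarrow> int set \<Rightarrow> nat \<Rightarrow> int set" where
  "Zproc U V Z0 n = (if n = 0 then Z0 else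
     {k. \<exists>ps. H_valid_path U V ps \<and> hd ps \<in> Z0 \<times> {0} \<and> last ps = (k, n)})"

definition dies_out :: "(int \<Rightarrow> nat \<Rightarrow> bool) \<Rightarrow> (int \<Rightarrow> nat \<Rightarrow> bool) \<Rightarrow> int set \<Rightarrow> bool" where
  "dies_out U V Z0 \<longleftrightarrow> (\<exists>n. Zproc U V Z0 n = {})"

definition N_ext :: "(int \<Rightarrow> nat \<Rightarrow> bool) \<Rightarrow> (int \<Rightarrow> nat \<Rightarrow> bool) \<Rightarrow> int set \<Rightarrow> ennreal" where
  "N_ext U V Z0 = (if dies_out U V Z0 then ennreal (real (LEAST n. Zproc U V Z0 n = {})) else \<infinity>)"

text \<open>Probability space: independent Bernoulli(eps) variables indexed by
  (False,k,n) for U'_{k,n} and (True,k,n) for V'_{{k,k+1},n}.\<close>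
definition bern_space :: "real \<Rightarrow> (bool \<times> int \<times> nat \<Rightarrow> bool) measure" where
  "bern_space \<epsilon> = (\<Pi>\<^sub>M i\<in>(UNIV :: (bool \<times> int \<times> nat) set). measure_pmf (bernoulli_pmf \<epsilon>))"

definition Uof :: "(bool \<times> int \<times> nat \<Rightarrow> bool) \<Rightarrow> int \<Rightarrow> nat \<Rightarrow> bool" where
  "Uof \<omega> k n = \<omega> (False, k, n)"

definition Vof :: "(bool \<times> int \<times> nat \<Rightarrow> bool) \<Rightarrow> int \<Rightarrow> nat \<Rightarrow> bool" where
  "Vof \<omega> k n = \<omega> (True, k, n)"

end

theory Submission imports Defs begin


lemma bern_prob: "prob_space (bern_space e)"
  unfolding bern_space_def by (rule prob_space_PiM) (simp add: prob_space_measure_pmf)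

lemma comp_meas: "(\<lambda>\<omega>. \<omega> c) \<in> measurable (bern_space e) (count_space UNIV)"
proof -
  have "(\<lambda>\<omega>. \<omega> c) \<in> measurable (bern_space e) (measure_pmf (bernoulli_pmf e))"
    unfolding bern_space_def by (rule measurable_component_singleton) simp
  then show ?thesis by (simp add: measurable_cong_sets)
qed

lemma cyl_pred: "finite S \<Longrightarrow> Measurable.pred (bern_space e) (\<lambda>\<omega>. \<forall>c\<in>S. \<omega> c)"
  using comp_meas by (intro pred_intros_finite) (auto simp: pred_def)

lemma cyl_meas:
  assumes "finite S" "0 \<le> e" "e \<le> 1"
  shows "measure (bern_space e) {\<omega>\<in>space (bern_space e). \<forall>c\<in>S. \<omega> c} = e ^ card S"
proof -
  have eq: "{\<omega>\<in>space (bern_space e). \<forall>c\<in>S. \<omega> c} =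
     prod_emb UNIV (\<lambda>_. measure_pmf (bernoulli_pmf e)) S (Pi\<^sub>E S (\<lambda>_. {True}))"
    unfolding bern_space_def prod_emb_def
    by (auto simp: space_PiM PiE_def extensional_def Pi_def restrict_def fun_eq_iff; metis)
  have "emeasure (bern_space e) {\<omega>\<in>space (bern_space e). \<forall>c\<in>S. \<omega> c} =
      (\<Prod>i\<in>S. emeasure (measure_pmf (bernoulli_pmf e)) {True})"
    unfolding eq unfolding bern_space_def
    by (rule emeasure_PiM_emb) (auto simp: assms prob_space_measure_pmf)
  also have "\<dots> = (\<Prod>i\<in>S. ennreal e)"
    using assms by (simp add: emeasure_pmf_single)
  also have "\<dots> = ennreal (e ^ card S)" using assms by (simp add: prod_ennreal ennreal_power)
  finally show ?thesis using assms by (simp add: measure_def)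
qed



fun reach :: "(bool \<times> int \<times> nat \<Rightarrow> bool) \<Rightarrow> nat \<Rightarrow> int \<Rightarrow> nat \<Rightarrow> bool" where
  "reach \<omega> 0 k t = True"
| "reach \<omega> (Suc n) k t = (\<exists>d\<in>{-1,0,1::int}.
     ((\<omega> (False,k,t) \<or> \<omega> (True,k,t) \<or> \<omega> (True,k-1,t)) \<and> reach \<omega> n (k+d) (Suc t))
   \<or> (\<exists>r::nat. (\<forall>i\<le>r. \<omega> (True, k + int i, t)) \<and> reach \<omega> n (k + int r + 1 + d) (Suc t))
   \<or> (\<exists>r::nat. (\<forall>i\<le>r. \<omega> (True, k - 1 - int i, t)) \<and> reach \<omega> n (k - int r - 1 + d) (Suc t)))"

lemma reach_pred: "Measurable.pred (bern_space e) (\<lambda>\<omega>. reach \<omega> n k t)"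
proof (induction n arbitrary: k t)
  case 0 then show ?case by simp
next
  case (Suc n)
  have c: "Measurable.pred (bern_space e) (\<lambda>\<omega>. \<omega> c)" for c using comp_meas by (simp add: pred_def)
  show ?case unfolding reach.simps
    by (intro pred_intros_finite pred_intros_countable pred_intros_logic c Suc) auto
qed

lemma valid_tail:
  assumes "H_valid_path U V (x # y # rest)"
  shows "H_valid_path U V (y # rest)" "H_adj U V x y" "snd x \<le> snd y"
        "snd x < snd (last (y # rest))"
proof -
  have A: "\<forall>i < Suc (length rest). H_adj U V ((x#y#rest) ! i) ((x#y#rest) ! Suc i) \<and> snd ((x#y#rest) ! i) \<le> snd ((x#y#rest) ! Suc i)"
   and B: "\<forall>i < Suc (length rest). snd ((x#y#rest) ! i) < snd (last (y#rest))"
    using assms unfolding H_valid_path_def by auto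
  from A[rule_format, of 0] show "H_adj U V x y" "snd x \<le> snd y" by auto
  from B[rule_format, of 0] show "snd x < snd (last (y # rest))" by auto
  show "H_valid_path U V (y # rest)" unfolding H_valid_path_def
  proof (intro conjI allI impI)
    fix i assume "i < length (y#rest) - 1"
    then have "Suc i < Suc (length rest)" by simp
    from A[rule_format, OF this] B[rule_format, OF this]
    show "H_adj U V ((y # rest) ! i) ((y # rest) ! Suc i)"
         "snd ((y # rest) ! i) \<le> snd ((y # rest) ! Suc i)"
         "snd ((y # rest) ! i) < snd (last (y # rest))" by auto
  qed simp
qed

definition edges :: "(bool \<times> int \<times> nat \<Rightarrow> bool) \<Rightarrow> int \<Rightarrow> int \<Rightarrow> nat \<Rightarrow> bool" where
  "edges \<omega> a b t \<longleftrightarrow> (\<forall>i. min a b \<le> i \<and> i < max a b \<longrightarrow> \<omega> (True, i, t))"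

lemma reach_step:
  assumes e: "edges \<omega> k0 a t" and w: "\<omega> (False,a,t) \<or> \<omega> (True,a,t) \<or> \<omega> (True,a-1,t)"
    and d: "d \<in> {-1,0,1::int}" and r: "reach \<omega> n (a+d) (Suc t)"
  shows "reach \<omega> (Suc n) k0 t"
proof (cases "a = k0")
  case True then show ?thesis using w d r by auto
next
  case False
  show ?thesis
  proof (cases "k0 < a")
    case True
    define r0 where "r0 = nat (a - k0 - 1)"
    have "\<forall>i\<le>r0. \<omega> (True, k0 + int i, t)" using e True unfolding edges_def r0_def by auto
    moreover have "k0 + int r0 + 1 + d = a + d" using True unfolding r0_def by simp
    ultimately show ?thesis using d r by auto
  next
    case F: False
    define r0 where "r0 = nat (k0 - a - 1)"
    have "\<forall>i\<le>r0. \<omega> (True, k0 - 1 - int i, t)" using e F False unfolding edges_def r0_def by auto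
    moreover have "k0 - int r0 - 1 + d = a + d" using F False unfolding r0_def by simp
    ultimately show ?thesis using d r by auto
  qed
qed

lemma path_reach:
  "H_valid_path (Uof \<omega>) (Vof \<omega>) ps \<Longrightarrow> hd ps = (a,t) \<Longrightarrow> edges \<omega> k0 a t \<Longrightarrow>
   snd (last ps) = t + n \<Longrightarrow> reach \<omega> n k0 t"
proof (induction ps arbitrary: a t k0 n)
  case Nil then show ?case by (simp add: H_valid_path_def)
next
  case (Cons x rest)
  show ?case
  proof (cases rest)
    case Nil
    then have "n = 0" using Cons by simp
    then show ?thesis by simp
  next
    case (Cons y rest')
    obtain b t' where y: "y = (b,t')" by (cases y)
    have x: "x = (a,t)" using Cons.prems by simp
    note vt = valid_tail[OF Cons.prems(1)[unfolded \<open>rest = y # rest'\<close>]]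
    have n0: "n \<noteq> 0" using vt(4) Cons.prems(4) x \<open>rest = y # rest'\<close> by simp
    have adj: "H_adj (Uof \<omega>) (Vof \<omega>) (a,t) (b,t')" "t \<le> t'" using vt x y by auto
    then have cases: "(t' = t + 1 \<and> \<bar>b - a\<bar> \<le> 1 \<and> (\<omega> (False,a,t) \<or> \<omega> (True,a,t) \<or> \<omega> (True,a-1,t)))
       \<or> (t' = t \<and> b = a + 1 \<and> \<omega> (True,a,t)) \<or> (t' = t \<and> a = b + 1 \<and> \<omega> (True,b,t))"
      unfolding H_adj_def H_dir_def Uof_def Vof_def by auto
    show ?thesis
    proof (cases "t' = t")
      case True
      have "edges \<omega> k0 b t" using cases True Cons.prems(3) unfolding edges_def
        by (auto; smt (verit))
      then show ?thesis using Cons.IH[of b t k0 n] vt(1) y True Cons.prems(4) \<open>rest = y # rest'\<close> by simp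
    next
      case False
      then obtain n' where n': "n = Suc n'" using n0 by (cases n) auto
      have t': "t' = Suc t" "\<bar>b - a\<bar> \<le> 1" and w: "\<omega> (False,a,t) \<or> \<omega> (True,a,t) \<or> \<omega> (True,a-1,t)"
        using cases False by auto
      have "edges \<omega> b b (Suc t)" unfolding edges_def by auto
      then have r: "reach \<omega> n' b (Suc t)"
        using Cons.IH[of b "Suc t" b n'] vt(1) y t' Cons.prems(4) n' \<open>rest = y # rest'\<close> by simp
      have d: "b - a \<in> {-1,0,1::int}" using t' by auto
      show ?thesis unfolding n' using reach_step[OF Cons.prems(3) w d] r by simp
    qed
  qed
qed

lemma Z_reach:
  assumes "Zproc (Uof \<omega>) (Vof \<omega>) Z0 n \<noteq> {}"
  shows "\<exists>k0\<in>Z0. reach \<omega> n k0 0"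
proof (cases "n = 0")
  case True then show ?thesis using assms by (auto simp: Zproc_def)
next
  case False
  then obtain k ps where ps: "H_valid_path (Uof \<omega>) (Vof \<omega>) ps" "hd ps \<in> Z0 \<times> {0}" "last ps = (k, n)"
    using assms by (auto simp: Zproc_def)
  then obtain k0 where "hd ps = (k0, 0)" "k0 \<in> Z0" by auto
  moreover have "edges \<omega> k0 k0 0" unfolding edges_def by auto
  ultimately show ?thesis using path_reach[OF ps(1)] ps(3) by force
qed



lemma Qsets: fixes e :: real and n t :: nat and j :: int shows "finite S \<Longrightarrow> {\<omega>\<in>space (bern_space e). (\<forall>c\<in>S. \<omega> c) \<and> reach \<omega> n j t} \<in> sets (bern_space e)"
  using cyl_pred[of S e] reach_pred[where e=e and n=n and k=j and t=t] unfolding pred_def[symmetric]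
  by (intro pred_intros_logic) auto

lemma fin_ub:
  assumes "prob_space M" "finite I" "\<And>i. i\<in>I \<Longrightarrow> A i \<in> sets M" "\<And>i. i\<in>I \<Longrightarrow> measure M (A i) \<le> b"
    "card I \<le> N" "0 \<le> b"
  shows "measure M (\<Union>i\<in>I. A i) \<le> real N * b"
proof -
  interpret prob_space M by fact
  have "measure M (\<Union>i\<in>I. A i) \<le> (\<Sum>i\<in>I. measure M (A i))"
    using assms by (intro finite_measure_subadditive_finite) auto
  also have "\<dots> \<le> (\<Sum>i\<in>I. b)" using assms by (intro sum_mono) auto
  also have "\<dots> = real (card I) * b" by simp
  also have "\<dots> \<le> real N * b" using assms by (intro mult_right_mono) auto
  finally show ?thesis .
qed

lemma cnt_ub:
  assumes "prob_space M" "\<And>r. A r \<in> sets M" "\<And>r. measure M (A r) \<le> a r" "summable a"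
  shows "measure M (\<Union>r. A r) \<le> suminf a"
proof -
  interpret prob_space M by fact
  have s: "summable (\<lambda>r. measure M (A r))"
    using assms by (intro summable_comparison_test'[OF assms(4)]) auto
  have "measure M (\<Union>r. A r) \<le> (\<Sum>r. measure M (A r))"
    using assms s by (intro finite_measure_subadditive_countably) auto
  also have "\<dots> \<le> suminf a" using assms s by (intro suminf_le) auto
  finally show ?thesis .
qed

lemma eps_ineq: "0 < (e::real) \<Longrightarrow> e \<le> 1/40 \<Longrightarrow> 9*e + 6*e/(1-e) \<le> 1/2"
proof -
  assume a: "0 < e" "e \<le> 1/40"
  have "6*e/(1-e) \<le> 6*e*(40/39)" using a by (simp add: field_simps)
  then show ?thesis using a by linarith
qed

lemma card_chain: "card ((\<lambda>i::nat. (True, k + c * int i, t::nat)) ` {..r}) = Suc r" if "c = 1 \<or> c = -1" for c k :: int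
proof -
  have "inj_on (\<lambda>i::nat. (True, k + c * int i, t)) {..r}" using that by (auto simp: inj_on_def)
  then show ?thesis by (simp add: card_image)
qed

lemma main_bound:
  assumes e: "0 < e" "e \<le> 1/40"
  shows "finite S0 \<Longrightarrow> (\<forall>c\<in>S0. snd (snd c) < t) \<Longrightarrow>
    measure (bern_space e) {\<omega>\<in>space (bern_space e). (\<forall>c\<in>S0. \<omega> c) \<and> reach \<omega> n k t}
      \<le> e ^ card S0 * (1/2) ^ n"
proof (induction n arbitrary: S0 k t)
  case 0
  then show ?case using cyl_meas[of S0 e] e by simp
next
  case (Suc n)
  let ?M = "bern_space e"
  interpret prob_space ?M by (rule bern_prob)
  define Q where "Q S j = {\<omega>\<in>space ?M. (\<forall>c\<in>S. \<omega> c) \<and> reach \<omega> n j (Suc t)}" for S j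
  define s where "s = card S0"
  define B where "B = e ^ s * (1/2::real) ^ n"
  have B0: "0 \<le> B" using e unfolding B_def by simp
  define D where "D = {-1,0,1::int}"
  define W where "W = {(False,k,t),(True,k,t),(True,k-1,t)}"
  define CR where "CR r = (\<lambda>i::nat. (True, k + 1 * int i, t)) ` {..r}" for r
  define CL where "CL r = (\<lambda>i::nat. (True, (k - 1) + (-1) * int i, t)) ` {..r}" for r
  define A1 where "A1 = (\<Union>d\<in>D. \<Union>c\<in>W. Q (insert c S0) (k+d))"
  define A2 where "A2 = (\<Union>r. \<Union>d\<in>D. Q (S0 \<union> CR r) (k + int r + 1 + d))"
  define A3 where "A3 = (\<Union>r. \<Union>d\<in>D. Q (S0 \<union> CL r) (k - int r - 1 + d))"
  have Qs: "finite S \<Longrightarrow> Q S j \<in> sets ?M" for S j unfolding Q_def by (rule Qsets)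
  have fW: "finite W" and fCR: "finite (CR r)" and fCL: "finite (CL r)" for r
    unfolding W_def CR_def CL_def by auto
  have IH: "finite S \<Longrightarrow> \<forall>c\<in>S. snd (snd c) < Suc t \<Longrightarrow> measure ?M (Q S j) \<le> e ^ card S * (1/2) ^ n" for S j
    unfolding Q_def using Suc.IH by blast
  have lev: "\<forall>c\<in>S0. snd (snd c) < Suc t" using Suc.prems by auto
  have A1s: "A1 \<in> sets ?M" unfolding A1_def using Suc.prems fW
    by (intro sets.finite_UN) (auto simp: D_def intro!: Qs)
  have A2s: "A2 \<in> sets ?M" unfolding A2_def using Suc.prems fCR
    by (intro sets.countable_UN sets.finite_UN) (auto simp: D_def intro!: Qs)
  have A3s: "A3 \<in> sets ?M" unfolding A3_def using Suc.prems fCL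
    by (intro sets.countable_UN sets.finite_UN) (auto simp: D_def intro!: Qs)
  have cover: "{\<omega>\<in>space ?M. (\<forall>c\<in>S0. \<omega> c) \<and> reach \<omega> (Suc n) k t} \<subseteq> A1 \<union> A2 \<union> A3"
  proof
    fix \<omega> assume "\<omega> \<in> {\<omega>\<in>space ?M. (\<forall>c\<in>S0. \<omega> c) \<and> reach \<omega> (Suc n) k t}"
    then have sp: "\<omega> \<in> space ?M" and S: "\<forall>c\<in>S0. \<omega> c" and R: "reach \<omega> (Suc n) k t" by auto
    from R have "\<exists>d\<in>D. ((\<omega> (False,k,t) \<or> \<omega> (True,k,t) \<or> \<omega> (True,k-1,t)) \<and> reach \<omega> n (k+d) (Suc t))
   \<or> (\<exists>r::nat. (\<forall>i\<le>r. \<omega> (True, k + int i, t)) \<and> reach \<omega> n (k + int r + 1 + d) (Suc t))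
   \<or> (\<exists>r::nat. (\<forall>i\<le>r. \<omega> (True, k - 1 - int i, t)) \<and> reach \<omega> n (k - int r - 1 + d) (Suc t))"
      unfolding D_def by simp
    then obtain d where d: "d \<in> D" and
      alt: "((\<omega> (False,k,t) \<or> \<omega> (True,k,t) \<or> \<omega> (True,k-1,t)) \<and> reach \<omega> n (k+d) (Suc t))
   \<or> (\<exists>r::nat. (\<forall>i\<le>r. \<omega> (True, k + int i, t)) \<and> reach \<omega> n (k + int r + 1 + d) (Suc t))
   \<or> (\<exists>r::nat. (\<forall>i\<le>r. \<omega> (True, k - 1 - int i, t)) \<and> reach \<omega> n (k - int r - 1 + d) (Suc t))"
      by blast
    show "\<omega> \<in> A1 \<union> A2 \<union> A3"
    proof (cases "(\<omega> (False,k,t) \<or> \<omega> (True,k,t) \<or> \<omega> (True,k-1,t)) \<and> reach \<omega> n (k+d) (Suc t)")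
      case True
      then obtain c where "c \<in> W" "\<omega> c" unfolding W_def by auto
      then have "\<omega> \<in> Q (insert c S0) (k+d)" unfolding Q_def using sp S True by auto
      then show ?thesis unfolding A1_def using d \<open>c \<in> W\<close> by blast
    next
      case False
      show ?thesis
      proof (cases "\<exists>r::nat. (\<forall>i\<le>r. \<omega> (True, k + int i, t)) \<and> reach \<omega> n (k + int r + 1 + d) (Suc t)")
        case True
        then obtain r where r: "\<forall>i\<le>r. \<omega> (True, k + int i, t)" "reach \<omega> n (k + int r + 1 + d) (Suc t)" by auto
        then have "\<omega> \<in> Q (S0 \<union> CR r) (k + int r + 1 + d)" unfolding Q_def CR_def using sp S by auto
        then show ?thesis unfolding A2_def using d by blast
      next
        case F2: False
        then obtain r where r: "\<forall>i\<le>r. \<omega> (True, k - 1 - int i, t)" "reach \<omega> n (k - int r - 1 + d) (Suc t)"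
          using alt False by auto
        then have "\<omega> \<in> Q (S0 \<union> CL r) (k - int r - 1 + d)" unfolding Q_def CL_def using sp S by auto
        then show ?thesis unfolding A3_def using d by blast
      qed
    qed
  qed
  have m1: "measure ?M A1 \<le> 9 * (e * B)"
  proof -
    have "measure ?M A1 \<le> real 3 * (real 3 * (e * B))" unfolding A1_def
    proof (rule fin_ub[OF bern_prob])
      fix d assume "d \<in> D"
      show "(\<Union>c\<in>W. Q (insert c S0) (k + d)) \<in> sets ?M" using fW Suc.prems by (intro sets.finite_UN) (auto intro!: Qs)
      show "measure ?M (\<Union>c\<in>W. Q (insert c S0) (k + d)) \<le> real 3 * (e * B)"
      proof (rule fin_ub[OF bern_prob fW])
        fix c assume c: "c \<in> W"
        then have "c \<notin> S0" using Suc.prems unfolding W_def by auto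
        then have "card (insert c S0) = Suc s" using Suc.prems s_def by simp
        moreover have "\<forall>c'\<in>insert c S0. snd (snd c') < Suc t" using lev c unfolding W_def by auto
        ultimately show "measure ?M (Q (insert c S0) (k + d)) \<le> e * B"
          using IH[of "insert c S0" "k+d"] Suc.prems unfolding B_def by simp
      qed (auto simp: W_def card_insert_le_m1 B0 e intro!: Qs Suc.prems card_insert_le_m1 order.trans[OF card_insert_le] e(1)[THEN less_imp_le] mult_nonneg_nonneg
           | use Suc.prems in simp)+
    qed (auto simp: D_def B0 e(1)[THEN less_imp_le])
    then show ?thesis by simp
  qed
  have geo: "summable (\<lambda>r. (3*e*B) * e^r)" "(\<Sum>r. (3*e*B) * e^r) = 3*e*B/(1-e)"
    using e by (auto intro!: summable_mult summable_geometric simp: suminf_mult suminf_geometric)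
  have chain_bound: "measure ?M (\<Union>d\<in>D. Q (S0 \<union> C) (j d)) \<le> (3*e*B) * e^r"
    if C: "C = (\<lambda>i::nat. (True, k0 + c * int i, t)) ` {..r}" "c = 1 \<or> c = -1" for C c k0 r j
  proof -
    have fC: "finite C" using C by simp
    have disj: "S0 \<inter> C = {}" using Suc.prems C by auto
    have cardC: "card (S0 \<union> C) = s + Suc r"
      using card_Un_disjoint[OF Suc.prems(1) fC disj] card_chain[OF C(2)] C s_def by simp
    have levC: "\<forall>c'\<in>S0 \<union> C. snd (snd c') < Suc t" using lev C by auto
    have "measure ?M (\<Union>d\<in>D. Q (S0 \<union> C) (j d)) \<le> real 3 * (e ^ (s + Suc r) * (1/2)^n)"
    proof (rule fin_ub[OF bern_prob])
      fix d assume "d \<in> D"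
      show "Q (S0 \<union> C) (j d) \<in> sets ?M" using fC Suc.prems by (intro Qs) auto
      show "measure ?M (Q (S0 \<union> C) (j d)) \<le> e ^ (s + Suc r) * (1/2)^n"
        using IH[of "S0 \<union> C" "j d"] fC Suc.prems levC cardC by simp
    qed (auto simp: D_def e(1)[THEN less_imp_le])
    also have "\<dots> = (3*e*B) * e^r" unfolding B_def by (simp add: power_add)
    finally show ?thesis .
  qed
  have m2: "measure ?M A2 \<le> 3*e*B/(1-e)"
  proof -
    have b: "measure ?M (\<Union>d\<in>D. Q (S0 \<union> CR r) (k + int r + 1 + d)) \<le> (3*e*B) * e^r" for r
      by (rule chain_bound[OF CR_def]) simp
    show ?thesis unfolding A2_def geo(2)[symmetric]
      by (rule cnt_ub[OF bern_prob _ b geo(1)], intro sets.finite_UN)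
         (auto simp: D_def intro!: Qs Suc.prems(1) simp: fCR)
  qed
  have m3: "measure ?M A3 \<le> 3*e*B/(1-e)"
  proof -
    have b: "measure ?M (\<Union>d\<in>D. Q (S0 \<union> CL r) (k - int r - 1 + d)) \<le> (3*e*B) * e^r" for r
      by (rule chain_bound[OF CL_def]) simp
    show ?thesis unfolding A3_def geo(2)[symmetric]
      by (rule cnt_ub[OF bern_prob _ b geo(1)], intro sets.finite_UN)
         (auto simp: D_def intro!: Qs Suc.prems(1) simp: fCL)
  qed
  have "measure ?M {\<omega>\<in>space ?M. (\<forall>c\<in>S0. \<omega> c) \<and> reach \<omega> (Suc n) k t} \<le> measure ?M (A1 \<union> A2 \<union> A3)"
    using cover A1s A2s A3s by (intro finite_measure_mono) auto
  also have "\<dots> \<le> measure ?M A1 + measure ?M A2 + measure ?M A3"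
    using A1s A2s A3s measure_Un_le[of "A1 \<union> A2" ?M A3] measure_Un_le[of A1 ?M A2] by auto
  also have "\<dots> \<le> 9*(e*B) + 3*e*B/(1-e) + 3*e*B/(1-e)" using m1 m2 m3 by linarith
  also have "\<dots> = B * (9*e + 6*e/(1-e))" by (simp add: field_simps)
  also have "\<dots> \<le> B * (1/2)" using eps_ineq[OF e] B0 by (intro mult_left_mono) auto
  also have "\<dots> = e ^ card S0 * (1/2) ^ Suc n" unfolding B_def s_def by simp
  finally show ?case .
qed


lemma sum_tail_bound:
  assumes c: "1 \<le> (c::real)"
  shows "summable (\<lambda>n. min 1 (c * (1/2)^n)) \<and> (\<Sum>n. min 1 (c * (1/2)^n)) \<le> (1 / ln 2) * ln c + 3"
proof -
  define f where "f n = min 1 (c * (1/2::real)^n)" for n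
  have sg: "summable (\<lambda>n. c * (1/2::real)^n)" by (intro summable_mult summable_geometric) simp
  have sf: "summable f" unfolding f_def
    by (rule summable_comparison_test'[OF sg, where N=0]) (use c in auto)
  define L where "L = nat \<lceil>log 2 c\<rceil>"
  have lg0: "0 \<le> log 2 c" using c by simp
  have L1: "real L \<le> log 2 c + 1" unfolding L_def using lg0 by linarith
  have cL: "c \<le> 2 ^ L"
  proof -
    have "c = 2 powr (log 2 c)" using c by simp
    also have "\<dots> \<le> 2 powr (real L)" unfolding L_def using lg0 by (intro powr_mono) auto
    also have "\<dots> = 2 ^ L" by (simp add: powr_realpow)
    finally show ?thesis .
  qed
  have split: "suminf f = (\<Sum>n. f (n + L)) + sum f {..<L}"
    by (rule suminf_split_initial_segment[OF sf])
  have "sum f {..<L} \<le> sum (\<lambda>_. 1) {..<L}" unfolding f_def by (intro sum_mono) auto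
  then have s1: "sum f {..<L} \<le> real L" by simp
  have tl: "f (n + L) \<le> (1/2)^n" for n
  proof -
    have "f (n+L) \<le> c * (1/2)^(n+L)" unfolding f_def by simp
    also have "\<dots> = (c / 2^L) * (1/2)^n" by (simp add: power_add field_simps)
    also have "\<dots> \<le> 1 * (1/2)^n" using cL by (intro mult_right_mono) auto
    finally show ?thesis by simp
  qed
  have "(\<Sum>n. f (n + L)) \<le> (\<Sum>n. (1/2::real)^n)"
    using tl by (intro suminf_le) (auto intro!: summable_ignore_initial_segment sf)
  also have "\<dots> = 2" using suminf_geometric[of "1/2::real"] by simp
  finally have s2: "(\<Sum>n. f (n + L)) \<le> 2" .
  have "log 2 c = (1 / ln 2) * ln c" by (simp add: log_def)
  then show ?thesis using split s1 s2 L1 sf unfolding f_def by simp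
qed



lemma R_facts:
  assumes e: "0 < e" "e \<le> 1/40" and Z: "finite Z0"
  defines "R \<equiv> \<lambda>n. {\<omega>\<in>space (bern_space e). \<exists>k0\<in>Z0. reach \<omega> n k0 0}"
  shows "R n \<in> sets (bern_space e)" "measure (bern_space e) (R n) \<le> real (card Z0) * (1/2)^n"
    "{\<omega>\<in>space (bern_space e). Zproc (Uof \<omega>) (Vof \<omega>) Z0 n \<noteq> {}} \<subseteq> R n"
proof -
  have eq: "R n = (\<Union>k0\<in>Z0. {\<omega>\<in>space (bern_space e). (\<forall>c\<in>{}. \<omega> c) \<and> reach \<omega> n k0 0})"
    unfolding R_def by auto
  show "R n \<in> sets (bern_space e)" unfolding eq using Z by (intro sets.finite_UN Qsets) auto
  show "measure (bern_space e) (R n) \<le> real (card Z0) * (1/2)^n" unfolding eq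
    using main_bound[OF e, of "{}" 0 n] Z by (intro fin_ub[OF bern_prob Z]) (auto intro!: reach_pred[unfolded pred_def])
  show "{\<omega>\<in>space (bern_space e). Zproc (Uof \<omega>) (Vof \<omega>) Z0 n \<noteq> {}} \<subseteq> R n"
    unfolding R_def using Z_reach by blast
qed

theorem lemma2:
  shows "\<exists>\<epsilon>0 > 0. \<forall>\<epsilon>. 0 < \<epsilon> \<and> \<epsilon> \<le> \<epsilon>0 \<longrightarrow>
     (\<forall>Z0 :: int set. finite Z0 \<longrightarrow>
        (AE \<omega> in bern_space \<epsilon>. dies_out (Uof \<omega>) (Vof \<omega>) Z0)) \<and>
     (\<exists>\<beta>0 > 0. \<exists>\<beta>1 > 0. \<forall>Z0 :: int set. finite Z0 \<and> Z0 \<noteq> {} \<longrightarrow>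
        (\<integral>\<^sup>+ \<omega>. N_ext (Uof \<omega>) (Vof \<omega>) Z0 \<partial>bern_space \<epsilon>)
          \<le> ennreal (\<beta>0 * ln (real (card Z0)) + \<beta>1))"
proof (rule exI[of _ "1/40::real"], rule conjI, simp, rule allI, rule impI, rule conjI)
  fix e :: real assume ee: "0 < e \<and> e \<le> 1/40"
  then have e: "0 < e" "e \<le> 1/40" by auto
  let ?M = "bern_space e"
  interpret prob_space ?M by (rule bern_prob)
  define R where "R Z0 n = {\<omega>\<in>space ?M. \<exists>k0\<in>Z0. reach \<omega> n k0 0}" for Z0 n
  note RF = R_facts[OF e, folded R_def]
  show "\<forall>Z0::int set. finite Z0 \<longrightarrow> (AE \<omega> in ?M. dies_out (Uof \<omega>) (Vof \<omega>) Z0)"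
  proof (intro allI impI)
    fix Z0 :: "int set" assume Z: "finite Z0"
    define N where "N = (\<Inter>n. R Z0 n)"
    have Ns: "N \<in> sets ?M" unfolding N_def using RF(1)[OF Z] by auto
    have "measure ?M N \<le> real (card Z0) * (1/2)^n" for n
    proof -
      have "N \<subseteq> R Z0 n" unfolding N_def by auto
      then show ?thesis using finite_measure_mono[of N "R Z0 n"] RF(1,2)[OF Z, of n] by linarith
    qed
    moreover have "(\<lambda>n. real (card Z0) * (1/2::real)^n) \<longlonglongrightarrow> 0"
      by (intro tendsto_mult_right_zero LIMSEQ_realpow_zero) auto
    ultimately have "measure ?M N \<le> 0" by (intro LIMSEQ_le_const[of _ 0]) auto
    then have "emeasure ?M N = 0" using emeasure_eq_measure[of N] measure_nonneg[of ?M N] by simp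
    moreover have "{\<omega>\<in>space ?M. \<not> dies_out (Uof \<omega>) (Vof \<omega>) Z0} \<subseteq> N"
      unfolding N_def dies_out_def using RF(3)[OF Z] by blast
    ultimately show "AE \<omega> in ?M. dies_out (Uof \<omega>) (Vof \<omega>) Z0" using Ns by (intro AE_I) auto
  qed
  show "\<exists>\<beta>0>0. \<exists>\<beta>1>0. \<forall>Z0. finite Z0 \<and> Z0 \<noteq> {} \<longrightarrow>
       (\<integral>\<^sup>+ \<omega>. N_ext (Uof \<omega>) (Vof \<omega>) Z0 \<partial>?M) \<le> ennreal (\<beta>0 * ln (real (card Z0)) + \<beta>1)"
  proof (rule exI[of _ "1 / ln 2"], rule conjI, simp, rule exI[of _ "3::real"], rule conjI, simp, intro allI impI)
    fix Z0 :: "int set" assume Z: "finite Z0 \<and> Z0 \<noteq> {}"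
    then have Zf: "finite Z0" and c1: "1 \<le> real (card Z0)" by (auto simp: Suc_le_eq card_gt_0_iff)
    define c where "c = real (card Z0)"
    define f where "f n = min 1 (c * (1/2::real)^n)" for n
    have pw: "N_ext (Uof \<omega>) (Vof \<omega>) Z0 \<le> (\<Sum>n. indicator (R Z0 n) \<omega>)" if \<omega>: "\<omega> \<in> space ?M" for \<omega>
    proof (cases "dies_out (Uof \<omega>) (Vof \<omega>) Z0")
      case True
      define L where "L = (LEAST n. Zproc (Uof \<omega>) (Vof \<omega>) Z0 n = {})"
      have "n < L \<Longrightarrow> \<omega> \<in> R Z0 n" for n
        using not_less_Least[of n "\<lambda>n. Zproc (Uof \<omega>) (Vof \<omega>) Z0 n = {}"] RF(3)[OF Zf, of n] \<omega>
        unfolding L_def by blast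
      then have "(\<Sum>n<L. indicator (R Z0 n) \<omega> :: ennreal) = (\<Sum>n<L. 1)" by (intro sum.cong) auto
      then have "(\<Sum>n<L. indicator (R Z0 n) \<omega> :: ennreal) = of_nat L" by simp
      moreover have "(\<Sum>n<L. indicator (R Z0 n) \<omega> :: ennreal) \<le> (\<Sum>n. indicator (R Z0 n) \<omega>)"
        by (intro sum_le_suminf) auto
      ultimately show ?thesis using True unfolding N_ext_def L_def[symmetric]
        by (simp add: ennreal_of_nat_eq_real_of_nat)
    next
      case False
      then have "\<omega> \<in> R Z0 n" for n using RF(3)[OF Zf, of n] \<omega> unfolding dies_out_def by blast
      then have "(\<Sum>n. indicator (R Z0 n) \<omega> :: ennreal) = (\<Sum>n. ennreal 1)" by simp
      also have "\<dots> = top" by (rule summable_iff_suminf_neq_top) (auto simp: summable_const_iff)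
      finally show ?thesis by simp
    qed
    have "(\<integral>\<^sup>+ \<omega>. N_ext (Uof \<omega>) (Vof \<omega>) Z0 \<partial>?M) \<le> (\<integral>\<^sup>+ \<omega>. (\<Sum>n. indicator (R Z0 n) \<omega>) \<partial>?M)"
      using pw by (intro nn_integral_mono) auto
    also have "\<dots> = (\<Sum>n. \<integral>\<^sup>+ \<omega>. indicator (R Z0 n) \<omega> \<partial>?M)"
      using RF(1)[OF Zf] by (intro nn_integral_suminf) auto
    also have "\<dots> = (\<Sum>n. ennreal (measure ?M (R Z0 n)))"
      using RF(1)[OF Zf] by (simp add: emeasure_eq_measure)
    also have "\<dots> \<le> (\<Sum>n. ennreal (f n))"
    proof (intro suminf_le ennreal_leI)
      fix n
      show "measure ?M (R Z0 n) \<le> f n" unfolding f_def c_def using RF(2)[OF Zf, of n] by simp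
    qed auto
    also have "\<dots> = ennreal (\<Sum>n. f n)"
      using sum_tail_bound[OF c1] unfolding f_def c_def by (intro suminf_ennreal2) auto
    also have "\<dots> \<le> ennreal (1 / ln 2 * ln (real (card Z0)) + 3)"
      using sum_tail_bound[OF c1] unfolding f_def c_def by (intro ennreal_leI) auto
    finally show "(\<integral>\<^sup>+ \<omega>. N_ext (Uof \<omega>) (Vof \<omega>) Z0 \<partial>?M) \<le> ennreal (1 / ln 2 * ln (real (card Z0)) + 3)" .
  qed
qed


end
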